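(* Fix $\theta\in(0,1]$. For every integer $k\ge1$, $$\sup\Big\{\sup_{x\in\mathbb X}\frac{|(\widehat P_kf)(x)-(Pf)(x)|}{V(x)}:\ f:\mathbb X\to\mathbb C\ \text{measurable},\ \sup_{\mathbb X}|f|\le1\Big\}\ \le\ \tau_k:=2\max\Big(\frac1{v(k)},\ \alpha_k+\ell_{k,\theta}\,\delta_k^{\theta}\Big).$$
   Context: Let $(\mathbb X,d)$ be a metric space with Borel $\sigma$-algebra $\mathcal X$, $\mu$ a positive measure, and $P$ a Markov kernel $P(x,dy)=p(x,y)\,\mu(dy)$ with $p:\mathbb X^2\to[0,\infty)$ measurable, $\int p(x,y)\mu(dy)=1$; $(Pf)(x)=\int f(y)p(x,y)\mu(dy)$. Fix $x_0\in\mathbb X$. Let $v:[0,\infty)\to[1,\infty)$ be unbounded, increasing, continuous with $v(0)=1$, and $V(x):=v(d(x,x_0))$. For each integer $k\ge1$: $\delta_k>0$; $\mathbb X_k\in\mathcal X$ with $\{d(x,x_0)<k\}\subseteq\mathbb X_k\subseteq\{d(x,x_0)\le k\}$; $\{\mathbb X_{i,k}\}_{i\in I_k}$ a finite family of pairwise disjoint nonempty measurable sets with union $\mathbb X_k$ and $\mathrm{diam}(\mathbb X_{i,k})\le\delta_k$. Define $m_{i,k}(f):=\int_{\mathbb X_k}f(y)\inf_{t\in\mathbb X_{i,k}}p(t,y)\,\mu(dy)$, $(\widehat Q_kf)(x):=\sum_{i\in I_k}m_{i,k}(f)1_{\mathbb X_{i,k}}(x)$, $\psi_k:=1_{\mathbb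 X}-\widehat Q_k1_{\mathbb X}$, $\widehat P_kf:=\widehat Q_kf+f(x_0)\psi_k$. Let $\alpha_k:=\sup_{u\in\mathbb X_k}P(u,\mathbb X\setminus\mathbb X_k)/V(u)$, $L_{i,k,\theta}(y):=\sup\{|p(x,y)-p(x',y)|/d(x,x')^\theta:\ x,x'\in\mathbb X_{i,k},\ x\ne x'\}\in[0,\infty]$ for $y\in\mathbb X_k$, and $\ell_{k,\theta}:=\max_{i\in I_k}\int_{\mathbb X_k}L_{i,k,\theta}(y)\,\mu(dy)\in[0,\infty]$. *)

theory Defs
  imports "HOL-Analysis.Analysis"
begin

definition Pop :: "'a measure \<Rightarrow> ('a \<Rightarrow> 'a \<Rightarrow> real) \<Rightarrow> ('a \<Rightarrow> complex) \<Rightarrow> 'a \<Rightarrow> complex" where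
  "Pop M p f x = (\<integral>y. f y * complex_of_real (p x y) \<partial>M)"

definition Pker :: "'a measure \<Rightarrow> ('a \<Rightarrow> 'a \<Rightarrow> real) \<Rightarrow> 'a \<Rightarrow> 'a set \<Rightarrow> real" where
  "Pker M p u A = enn2real (\<integral>\<^sup>+y. ennreal (p u y) * indicator A y \<partial>M)"

definition mik :: "'a measure \<Rightarrow> ('a \<Rightarrow> 'a \<Rightarrow> real) \<Rightarrow> 'a set \<Rightarrow> 'a set \<Rightarrow> ('a \<Rightarrow> complex) \<Rightarrow> complex" where
  "mik M p Xk A f = (LINT y:Xk|M. f y * complex_of_real (INF t\<in>A. p t y))"

definition Qhat :: "'a measure \<Rightarrow> ('a \<Rightarrow> 'a \<Rightarrow> real) \<Rightarrow> 'a set \<Rightarrow> 'i set \<Rightarrow> ('i \<Rightarrow> 'a set)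
    \<Rightarrow> ('a \<Rightarrow> complex) \<Rightarrow> 'a \<Rightarrow> complex" where
  "Qhat M p Xk I Xp f x = (\<Sum>i\<in>I. mik M p Xk (Xp i) f * indicator (Xp i) x)"

definition psi :: "'a measure \<Rightarrow> ('a \<Rightarrow> 'a \<Rightarrow> real) \<Rightarrow> 'a set \<Rightarrow> 'i set \<Rightarrow> ('i \<Rightarrow> 'a set) \<Rightarrow> 'a \<Rightarrow> complex" where
  "psi M p Xk I Xp x = 1 - Qhat M p Xk I Xp (\<lambda>_. 1) x"

definition Phat :: "'a measure \<Rightarrow> ('a \<Rightarrow> 'a \<Rightarrow> real) \<Rightarrow> 'a \<Rightarrow> 'a set \<Rightarrow> 'i set \<Rightarrow> ('i \<Rightarrow> 'a set)
    \<Rightarrow> ('a \<Rightarrow> complex) \<Rightarrow> 'a \<Rightarrow> complex" where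
  "Phat M p x0 Xk I Xp f x = Qhat M p Xk I Xp f x + f x0 * psi M p Xk I Xp x"

definition alpha :: "'a measure \<Rightarrow> ('a \<Rightarrow> 'a \<Rightarrow> real) \<Rightarrow> ('a \<Rightarrow> real) \<Rightarrow> 'a set \<Rightarrow> real" where
  "alpha M p V Xk = (SUP u\<in>Xk. Pker M p u (UNIV - Xk) / V u)"

definition Lconst :: "('a::metric_space \<Rightarrow> 'a \<Rightarrow> real) \<Rightarrow> 'a set \<Rightarrow> real \<Rightarrow> 'a \<Rightarrow> ennreal" where
  "Lconst p A \<theta> y = (SUP xx'\<in>{(x, x'). x \<in> A \<and> x' \<in> A \<and> x \<noteq> x'}.
      ennreal (\<bar>p (fst xx') y - p (snd xx') y\<bar> / dist (fst xx') (snd xx') powr \<theta>))"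

definition ell :: "'a measure \<Rightarrow> ('a::metric_space \<Rightarrow> 'a \<Rightarrow> real) \<Rightarrow> 'a set \<Rightarrow> 'i set \<Rightarrow> ('i \<Rightarrow> 'a set) \<Rightarrow> real \<Rightarrow> ennreal" where
  "ell M p Xk I Xp \<theta> = Max ((\<lambda>i. \<integral>\<^sup>+y. Lconst p (Xp i) \<theta> y * indicator Xk y \<partial>M) ` I)"

end

theory Submission
  imports Defs
begin

lemma Lconst_pw:
  fixes p :: "'a::metric_space \<Rightarrow> 'a \<Rightarrow> real"
  assumes xA: "x \<in> A" and diam: "\<And>a b. a \<in> A \<Longrightarrow> b \<in> A \<Longrightarrow> dist a b \<le> d"
    and d: "0 < d" and th: "0 < \<theta>" and nn: "\<And>t. 0 \<le> p t y"
  shows "ennreal ((p x y - (INF t\<in>A. p t y)) / d powr \<theta>) \<le> Lconst p A \<theta> y"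
proof (cases "Lconst p A \<theta> y" rule: ennreal_cases)
  case (real r)
  have dp: "0 < d powr \<theta>" using d by simp
  have key: "p x y - r * d powr \<theta> \<le> p t y" if t: "t \<in> A" for t
  proof (cases "t = x")
    case True then show ?thesis using real dp by (simp add: mult_nonneg_nonneg)
  next
    case False
    have mem: "(x, t) \<in> {(x, x'). x \<in> A \<and> x' \<in> A \<and> x \<noteq> x'}" using False xA t by auto
    have "ennreal (\<bar>p (fst (x,t)) y - p (snd (x,t)) y\<bar> / dist (fst (x,t)) (snd (x,t)) powr \<theta>)
          \<le> Lconst p A \<theta> y"
      unfolding Lconst_def by (rule SUP_upper[OF mem])
    hence le: "\<bar>p x y - p t y\<bar> / dist x t powr \<theta> \<le> r" using real by (simp add: ennreal_le_iff)
    have dpos: "0 < dist x t" using False by simp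
    have "dist x t powr \<theta> \<le> d powr \<theta>"
      using diam[OF xA t] th dpos by (intro powr_mono2) auto
    moreover have "\<bar>p x y - p t y\<bar> \<le> r * dist x t powr \<theta>"
      using le dpos by (simp add: divide_le_eq)
    ultimately have "\<bar>p x y - p t y\<bar> \<le> r * d powr \<theta>"
      using real by (meson mult_left_mono order_trans)
    then show ?thesis by linarith
  qed
  have "p x y - r * d powr \<theta> \<le> (INF t\<in>A. p t y)"
    using xA by (intro cINF_greatest key) auto
  hence "(p x y - (INF t\<in>A. p t y)) / d powr \<theta> \<le> r"
    using dp by (simp add: divide_le_eq algebra_simps)
  then show ?thesis using real by (simp add: ennreal_leI)
qed simp

theorem lemma2:
  fixes M :: "'a::metric_space measure"
    and p :: "'a \<Rightarrow> 'a \<Rightarrow> real"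
    and x0 :: 'a
    and v :: "real \<Rightarrow> real"
    and \<delta> :: "nat \<Rightarrow> real"
    and X :: "nat \<Rightarrow> 'a set"
    and I :: "nat \<Rightarrow> 'i set"
    and Xp :: "nat \<Rightarrow> 'i \<Rightarrow> 'a set"
    and \<theta> :: real
    and k :: nat
  assumes space_M: "space M = UNIV"
    and sets_M: "sets M = sets borel"
    and p_meas: "(\<lambda>(x, y). p x y) \<in> borel_measurable (M \<Otimes>\<^sub>M M)"
    and p_nonneg: "\<And>x y. 0 \<le> p x y"
    and p_prob: "\<And>x. (\<integral>\<^sup>+y. ennreal (p x y) \<partial>M) = 1"
    and v_ge1: "\<And>t. 0 \<le> t \<Longrightarrow> 1 \<le> v t"
    and v_unbounded: "\<not> bdd_above (v ` {0..})"
    and v_mono: "mono_on {0..} v"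
    and v_cont: "continuous_on {0..} v"
    and v0: "v 0 = 1"
    and \<delta>_pos: "\<And>k. 1 \<le> k \<Longrightarrow> 0 < \<delta> k"
    and X_meas: "\<And>k. 1 \<le> k \<Longrightarrow> X k \<in> sets M"
    and X_lower: "\<And>k. 1 \<le> k \<Longrightarrow> {x. dist x x0 < real k} \<subseteq> X k"
    and X_upper: "\<And>k. 1 \<le> k \<Longrightarrow> X k \<subseteq> {x. dist x x0 \<le> real k}"
    and I_finite: "\<And>k. 1 \<le> k \<Longrightarrow> finite (I k)"
    and part_meas: "\<And>k i. 1 \<le> k \<Longrightarrow> i \<in> I k \<Longrightarrow> Xp k i \<in> sets M"
    and part_nonempty: "\<And>k i. 1 \<le> k \<Longrightarrow> i \<in> I k \<Longrightarrow> Xp k i \<noteq> {}"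
    and part_disjoint: "\<And>k i j. 1 \<le> k \<Longrightarrow> i \<in> I k \<Longrightarrow> j \<in> I k \<Longrightarrow> i \<noteq> j
                          \<Longrightarrow> Xp k i \<inter> Xp k j = {}"
    and part_union: "\<And>k. 1 \<le> k \<Longrightarrow> (\<Union>i\<in>I k. Xp k i) = X k"
    and part_diam: "\<And>k i x y. 1 \<le> k \<Longrightarrow> i \<in> I k \<Longrightarrow> x \<in> Xp k i \<Longrightarrow> y \<in> Xp k i
                          \<Longrightarrow> dist x y \<le> \<delta> k"
    and inf_meas: "\<And>k i. 1 \<le> k \<Longrightarrow> i \<in> I k
                          \<Longrightarrow> (\<lambda>y. INF t\<in>Xp k i. p t y) \<in> borel_measurable M"
    and \<theta>_pos: "0 < \<theta>" and \<theta>_le1: "\<theta> \<le> 1"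
    and k_ge1: "1 \<le> k"
  shows "(SUP f\<in>{f. f \<in> borel_measurable M \<and> (\<forall>x. cmod (f x) \<le> 1)}.
            SUP x. ennreal (cmod (Phat M p x0 (X k) (I k) (Xp k) f x - Pop M p f x)
                             / v (dist x x0)))
         \<le> ennreal 2 * max (ennreal (1 / v (real k)))
             (ennreal (alpha M p (\<lambda>u. v (dist u x0)) (X k))
              + ell M p (X k) (I k) (Xp k) \<theta> * ennreal (\<delta> k powr \<theta>))"
proof -
  let ?V = "\<lambda>u. v (dist u x0)"
  let ?Xk = "X k"
  have V1: "\<And>u. 1 \<le> ?V u" using v_ge1 by simp
  have Xk_meas[measurable]: "X k \<in> sets M" using X_meas k_ge1 by blast
  have x0X: "x0 \<in> X k" using X_lower[OF k_ge1] k_ge1 by auto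
  have pm[measurable]: "(\<lambda>y. p x y) \<in> borel_measurable M" for x
  proof -
    have "(\<lambda>y. (\<lambda>(x, y). p x y) (x, y)) \<in> borel_measurable M"
      by (rule measurable_Pair2[OF p_meas]) (simp add: space_M)
    then show ?thesis by simp
  qed
  have int_p: "integrable M (\<lambda>y. p x y)" for x
    by (rule integrableI_nonneg) (auto simp: p_nonneg p_prob)
  have int_p1: "integral\<^sup>L M (\<lambda>y. p x y) = 1" for x
    by (subst integral_eq_nn_integral) (auto simp: p_nonneg p_prob)
  have Pker_nn: "0 \<le> Pker M p u A" for u A by (simp add: Pker_def)
  have Pker_le1: "Pker M p u A \<le> 1" for u A
  proof -
    have "(\<integral>\<^sup>+y. ennreal (p u y) * indicator A y \<partial>M) \<le> (\<integral>\<^sup>+y. ennreal (p u y) \<partial>M)"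
      by (intro nn_integral_mono) (auto split: split_indicator)
    then have "(\<integral>\<^sup>+y. ennreal (p u y) * indicator A y \<partial>M) \<le> 1" using p_prob by simp
    then show ?thesis unfolding Pker_def
      by (intro enn2real_leI) auto
  qed
  have bdd: "bdd_above ((\<lambda>u. Pker M p u (UNIV - X k) / ?V u) ` X k)"
  proof (rule bdd_aboveI2)
    fix u
    have Vp: "0 < ?V u" using V1[of u] by linarith
    have "Pker M p u (UNIV - X k) \<le> 1 * ?V u" using Pker_le1[of u "UNIV - X k"] V1[of u] by linarith
    then show "Pker M p u (UNIV - X k) / ?V u \<le> 1"
      using Vp by (simp only: pos_divide_le_eq)
  qed
  have alpha_ge: "Pker M p u (UNIV - X k) / ?V u \<le> alpha M p ?V (X k)" if "u \<in> X k" for u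
    unfolding alpha_def by (rule cSUP_upper[OF that bdd])
  have alpha_nn: "0 \<le> alpha M p ?V (X k)"
  proof -
    have "0 \<le> Pker M p x0 (UNIV - X k) / ?V x0"
      using Pker_nn[of x0] V1[of x0] by (intro divide_nonneg_nonneg) auto
    then show ?thesis using alpha_ge[OF x0X] by linarith
  qed
  have ell_ge: "(\<integral>\<^sup>+y. Lconst p (Xp k i) \<theta> y * indicator (X k) y \<partial>M) \<le> ell M p (X k) (I k) (Xp k) \<theta>"
    if "i \<in> I k" for i
    unfolding ell_def using that I_finite[OF k_ge1] by (intro Max_ge) auto
  define RHS where "RHS = ennreal 2 * max (ennreal (1 / v (real k)))
             (ennreal (alpha M p ?V (X k)) + ell M p (X k) (I k) (Xp k) \<theta> * ennreal (\<delta> k powr \<theta>))"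
  have main: "ennreal (cmod (Phat M p x0 (X k) (I k) (Xp k) f x - Pop M p f x) / ?V x) \<le> RHS"
    if fm[measurable]: "f \<in> borel_measurable M" and fb: "\<And>x. cmod (f x) \<le> 1" for f x
  proof -
    have bfp: "norm (f y * complex_of_real (p x y)) \<le> norm (p x y)" for y
    proof -
      have "cmod (f y) * p x y \<le> 1 * p x y" using fb[of y] p_nonneg[of x y] by (rule mult_right_mono)
      then show ?thesis using p_nonneg[of x y] by (simp add: norm_mult)
    qed
    have int_fp: "integrable M (\<lambda>y. f y * complex_of_real (p x y))"
      by (rule Bochner_Integration.integrable_bound[OF int_p[of x]], measurable, intro AE_I2 bfp)
    show ?thesis
    proof (cases "x \<in> X k")
      case False
      have nox: "x \<notin> Xp k j" if "j \<in> I k" for j using False part_union[OF k_ge1] that by blast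
      have Q0: "Qhat M p (X k) (I k) (Xp k) g x = 0" for g
        unfolding Qhat_def using nox by (intro sum.neutral) auto
      have Ph: "Phat M p x0 (X k) (I k) (Xp k) f x = f x0"
        unfolding Phat_def psi_def using Q0 by simp
      have "cmod (Pop M p f x) \<le> (\<integral>y. cmod (f y * complex_of_real (p x y)) \<partial>M)"
        unfolding Pop_def by (rule Bochner_Integration.integral_norm_bound)
      also have "\<dots> \<le> (\<integral>y. p x y \<partial>M)"
        by (rule Bochner_Integration.integral_mono[OF integrable_norm[OF int_fp] int_p[of x]])
           (use bfp p_nonneg in \<open>auto simp: abs_of_nonneg\<close>)
      finally have Pb: "cmod (Pop M p f x) \<le> 1" using int_p1 by simp
      have c2: "cmod (Phat M p x0 (X k) (I k) (Xp k) f x - Pop M p f x) \<le> 2"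
        unfolding Ph using norm_triangle_ineq4[of "f x0" "Pop M p f x"] fb[of x0] Pb by linarith
      have dk: "real k \<le> dist x x0" using False X_lower[OF k_ge1] by (force simp: not_less)
      have vk: "v (real k) \<le> ?V x" using v_mono dk by (auto simp: mono_on_def)
      have vk1: "1 \<le> v (real k)" using v_ge1 by simp
      have "cmod (Phat M p x0 (X k) (I k) (Xp k) f x - Pop M p f x) / ?V x \<le> 2 * (1 / v (real k))"
      proof -
        have "cmod (Phat M p x0 (X k) (I k) (Xp k) f x - Pop M p f x) / ?V x \<le> 2 / ?V x"
          using c2 vk vk1 by (intro divide_right_mono) auto
        also have "\<dots> \<le> 2 / v (real k)" using vk vk1 by (intro frac_le) auto
        finally show ?thesis by simp
      qed
      hence "ennreal (cmod (Phat M p x0 (X k) (I k) (Xp k) f x - Pop M p f x) / ?V x)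
           \<le> ennreal (2 * (1 / v (real k)))"
        by (intro ennreal_leI) simp
      also have "\<dots> = ennreal 2 * ennreal (1 / v (real k))"
        using vk1 by (intro ennreal_mult) auto
      also have "\<dots> \<le> RHS" unfolding RHS_def by (intro mult_left_mono) auto
      finally show ?thesis .
    next
      case True
      then obtain i where i: "i \<in> I k" "x \<in> Xp k i" using part_union[OF k_ge1] by blast
      define g where "g y = (INF t\<in>Xp k i. p t y)" for y
      have gm[measurable]: "g \<in> borel_measurable M" unfolding g_def using inf_meas[OF k_ge1 i(1)] .
      have g_nn: "0 \<le> g y" for y unfolding g_def
        using i part_nonempty[OF k_ge1 i(1)] by (intro cINF_greatest) (auto simp: p_nonneg)
      have g_le: "g y \<le> p x y" for y unfolding g_def
        by (rule cINF_lower[OF bdd_belowI2[where m=0]]) (auto simp: p_nonneg i)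
      have Qx: "Qhat M p (X k) (I k) (Xp k) h x = mik M p (X k) (Xp k i) h" for h
      proof -
        have "Qhat M p (X k) (I k) (Xp k) h x = (\<Sum>j\<in>I k. if j = i then mik M p (X k) (Xp k i) h else 0)"
          unfolding Qhat_def
        proof (intro sum.cong refl)
          fix j assume j: "j \<in> I k"
          show "mik M p (X k) (Xp k j) h * indicator (Xp k j) x = (if j = i then mik M p (X k) (Xp k i) h else 0)"
            using part_disjoint[OF k_ge1 j i(1)] i by (auto simp: indicator_def)
        qed
        also have "\<dots> = mik M p (X k) (Xp k i) h" using i I_finite[OF k_ge1] by simp
        finally show ?thesis .
      qed
      define h where "h y = p x y - indicator (X k) y * g y" for y
      have hm[measurable]: "h \<in> borel_measurable M" unfolding h_def by measurable
      have h_nn: "0 \<le> h y" for y using g_le g_nn p_nonneg[of x y] unfolding h_def by (auto simp: indicator_def)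
      have h_le: "h y \<le> p x y" for y using g_nn unfolding h_def by (auto simp: indicator_def)
      have int_g: "integrable M (\<lambda>y. indicator (X k) y * g y)"
        by (rule Bochner_Integration.integrable_bound[OF int_p[of x]]) (auto intro!: AE_I2 simp: indicator_def abs_of_nonneg g_nn p_nonneg g_le)
      have int_h: "integrable M h"
        by (rule Bochner_Integration.integrable_bound[OF int_p[of x]]) (auto intro!: AE_I2 simp: abs_of_nonneg h_nn p_nonneg h_le)
      have bfg: "norm (indicator (X k) y *\<^sub>R (f y * complex_of_real (g y))) \<le> norm (p x y)" for y
      proof -
        have "cmod (f y) * g y \<le> 1 * g y" using fb[of y] g_nn[of y] by (rule mult_right_mono)
        then have "cmod (f y) * g y \<le> p x y" using g_le[of y] by linarith
        then show ?thesis using g_nn[of y] p_nonneg[of x y] by (auto simp: indicator_def norm_mult)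
      qed
      have bfh: "norm (f y * complex_of_real (h y)) \<le> norm (p x y)" for y
      proof -
        have "cmod (f y) * h y \<le> 1 * h y" using fb[of y] h_nn[of y] by (rule mult_right_mono)
        then have "cmod (f y) * h y \<le> p x y" using h_le[of y] by linarith
        then show ?thesis using h_nn[of y] p_nonneg[of x y] by (auto simp: norm_mult)
      qed
      have int_fg: "integrable M (\<lambda>y. indicator (X k) y *\<^sub>R (f y * complex_of_real (g y)))"
        by (rule Bochner_Integration.integrable_bound[OF int_p[of x]], measurable, intro AE_I2 bfg)
      have int_fh: "integrable M (\<lambda>y. f y * complex_of_real (h y))"
        by (rule Bochner_Integration.integrable_bound[OF int_p[of x]], measurable, intro AE_I2 bfh)
      define c where "c = integral\<^sup>L M (\<lambda>y. indicator (X k) y * g y)"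
      have m1: "mik M p (X k) (Xp k i) (\<lambda>_. 1) = complex_of_real c"
        unfolding mik_def set_lebesgue_integral_def c_def g_def[symmetric]
        by (simp add: scaleR_conv_of_real flip: of_real_mult)
      have mf: "mik M p (X k) (Xp k i) f = integral\<^sup>L M (\<lambda>y. indicator (X k) y *\<^sub>R (f y * complex_of_real (g y)))"
        unfolding mik_def set_lebesgue_integral_def g_def by simp
      have hint: "integral\<^sup>L M h = 1 - c"
        unfolding h_def c_def using Bochner_Integration.integral_diff[OF int_p[of x] int_g] int_p1 by simp
      have fhint: "integral\<^sup>L M (\<lambda>y. f y * complex_of_real (h y))
          = Pop M p f x - mik M p (X k) (Xp k i) f"
      proof -
        have "integral\<^sup>L M (\<lambda>y. f y * complex_of_real (h y))
            = integral\<^sup>L M (\<lambda>y. f y * complex_of_real (p x y) - indicator (X k) y *\<^sub>R (f y * complex_of_real (g y)))"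
          unfolding h_def by (intro Bochner_Integration.integral_cong refl) (simp add: scaleR_conv_of_real algebra_simps)
        also have "\<dots> = Pop M p f x - mik M p (X k) (Xp k i) f"
          unfolding mf Pop_def by (rule Bochner_Integration.integral_diff[OF int_fp int_fg])
        finally show ?thesis .
      qed
      have diff: "Phat M p x0 (X k) (I k) (Xp k) f x - Pop M p f x
          = f x0 * complex_of_real (integral\<^sup>L M h) - integral\<^sup>L M (\<lambda>y. f y * complex_of_real (h y))"
        unfolding Phat_def psi_def Qx m1 fhint hint by (simp add: algebra_simps)
      have hI_nn: "0 \<le> integral\<^sup>L M h" using h_nn by (simp add: integral_nonneg_AE)
      have b2: "cmod (integral\<^sup>L M (\<lambda>y. f y * complex_of_real (h y))) \<le> integral\<^sup>L M h"
      proof -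
        have "cmod (integral\<^sup>L M (\<lambda>y. f y * complex_of_real (h y))) \<le> (\<integral>y. cmod (f y * complex_of_real (h y)) \<partial>M)"
          by (rule Bochner_Integration.integral_norm_bound)
        also have "\<dots> \<le> integral\<^sup>L M h"
          by (rule Bochner_Integration.integral_mono[OF integrable_norm[OF int_fh] int_h])
             (auto simp: norm_mult h_nn fb mult_left_le_one_le)
        finally show ?thesis .
      qed
      have b1: "cmod (f x0 * complex_of_real (integral\<^sup>L M h)) \<le> integral\<^sup>L M h"
        using hI_nn fb[of x0] by (simp add: norm_mult mult_left_le_one_le)
      have c2: "cmod (Phat M p x0 (X k) (I k) (Xp k) f x - Pop M p f x) \<le> 2 * integral\<^sup>L M h"
        unfolding diff using norm_triangle_ineq4[of "f x0 * complex_of_real (integral\<^sup>L M h)" "integral\<^sup>L M (\<lambda>y. f y * complex_of_real (h y))"] b1 b2 by linarith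
      define qA where "qA y = indicator (X k) y * (p x y - g y)" for y
      define qB where "qB y = indicator (UNIV - X k) y * p x y" for y
      have qAm[measurable]: "qA \<in> borel_measurable M" unfolding qA_def by measurable
      have qBm[measurable]: "qB \<in> borel_measurable M" unfolding qB_def by measurable
      have qA_nn: "0 \<le> qA y" for y unfolding qA_def using g_le[of y] by (auto simp: indicator_def)
      have qB_nn: "0 \<le> qB y" for y unfolding qB_def using p_nonneg[of x y] by (auto simp: indicator_def)
      have int_qA: "integrable M qA"
        by (rule Bochner_Integration.integrable_bound[OF int_p[of x]]) (auto intro!: AE_I2 simp: qA_def indicator_def abs_of_nonneg g_nn g_le p_nonneg)
      have int_qB: "integrable M qB"
        by (rule Bochner_Integration.integrable_bound[OF int_p[of x]]) (auto intro!: AE_I2 simp: qB_def indicator_def abs_of_nonneg p_nonneg)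
      define A where "A = integral\<^sup>L M qA"
      define B where "B = integral\<^sup>L M qB"
      have A_nn: "0 \<le> A" unfolding A_def using qA_nn by (simp add: integral_nonneg_AE)
      have B_nn: "0 \<le> B" unfolding B_def using qB_nn by (simp add: integral_nonneg_AE)
      have hAB: "integral\<^sup>L M h = A + B"
      proof -
        have "integral\<^sup>L M h = integral\<^sup>L M (\<lambda>y. qA y + qB y)"
          by (intro Bochner_Integration.integral_cong refl) (auto simp: h_def qA_def qB_def indicator_def)
        then show ?thesis unfolding A_def B_def using Bochner_Integration.integral_add[OF int_qA int_qB] by simp
      qed
      have BP: "B = Pker M p x (UNIV - X k)"
      proof -
        have "B = enn2real (\<integral>\<^sup>+y. ennreal (qB y) \<partial>M)"
          unfolding B_def by (rule integral_eq_nn_integral) (auto simp: qB_nn)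
        also have "(\<integral>\<^sup>+y. ennreal (qB y) \<partial>M) = (\<integral>\<^sup>+y. ennreal (p x y) * indicator (UNIV - X k) y \<partial>M)"
          by (intro nn_integral_cong) (auto simp: qB_def indicator_def)
        finally show ?thesis unfolding Pker_def .
      qed
      have Balpha: "B / ?V x \<le> alpha M p ?V (X k)" using BP alpha_ge[OF True] by simp
      have dpos: "0 < \<delta> k powr \<theta>" using \<delta>_pos[OF k_ge1] by simp
      have Aell: "ennreal A \<le> ell M p (X k) (I k) (Xp k) \<theta> * ennreal (\<delta> k powr \<theta>)"
      proof -
        have int_qA': "integrable M (\<lambda>y. qA y / \<delta> k powr \<theta>)" using int_qA by simp
        have "ennreal (A / \<delta> k powr \<theta>) = (\<integral>\<^sup>+y. ennreal (qA y / \<delta> k powr \<theta>) \<partial>M)"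
          unfolding A_def using nn_integral_eq_integral[OF int_qA'] qA_nn dpos by simp
        also have "\<dots> \<le> (\<integral>\<^sup>+y. Lconst p (Xp k i) \<theta> y * indicator (X k) y \<partial>M)"
        proof (intro nn_integral_mono)
          fix y
          show "ennreal (qA y / \<delta> k powr \<theta>) \<le> Lconst p (Xp k i) \<theta> y * indicator (X k) y"
          proof (cases "y \<in> X k")
            case True
            have "ennreal ((p x y - g y) / \<delta> k powr \<theta>) \<le> Lconst p (Xp k i) \<theta> y"
              unfolding g_def
              by (rule Lconst_pw[OF i(2) part_diam[OF k_ge1 i(1)] \<delta>_pos[OF k_ge1] \<theta>_pos p_nonneg])
            then show ?thesis using True by (simp add: qA_def)
          qed (simp add: qA_def)
        qed
        also have "\<dots> \<le> ell M p (X k) (I k) (Xp k) \<theta>" by (rule ell_ge[OF i(1)])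
        finally have le: "ennreal (A / \<delta> k powr \<theta>) \<le> ell M p (X k) (I k) (Xp k) \<theta>" .
        have "ennreal A = ennreal (A / \<delta> k powr \<theta>) * ennreal (\<delta> k powr \<theta>)"
          using dpos A_nn by (simp add: ennreal_mult[symmetric])
        also have "\<dots> \<le> ell M p (X k) (I k) (Xp k) \<theta> * ennreal (\<delta> k powr \<theta>)"
          by (rule mult_right_mono[OF le]) simp
        finally show ?thesis .
      qed
      have Vx: "1 \<le> ?V x" by (rule V1)
      have "cmod (Phat M p x0 (X k) (I k) (Xp k) f x - Pop M p f x) / ?V x \<le> 2 * (A + B) / ?V x"
        using c2 hAB Vx by (simp add: divide_right_mono)
      also have "\<dots> = 2 * (A / ?V x) + 2 * (B / ?V x)" by (simp add: add_divide_distrib)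
      also have "\<dots> \<le> 2 * (alpha M p ?V (X k) + A)"
      proof -
        have "A / ?V x \<le> A / 1" using A_nn Vx by (intro divide_left_mono) auto
        then show ?thesis using Balpha by simp
      qed
      finally have r: "cmod (Phat M p x0 (X k) (I k) (Xp k) f x - Pop M p f x) / ?V x \<le> 2 * (alpha M p ?V (X k) + A)" .
      have "ennreal (cmod (Phat M p x0 (X k) (I k) (Xp k) f x - Pop M p f x) / ?V x)
           \<le> ennreal (2 * (alpha M p ?V (X k) + A))" by (rule ennreal_leI[OF r])
      also have "\<dots> = ennreal 2 * (ennreal (alpha M p ?V (X k)) + ennreal A)"
        using alpha_nn A_nn by (simp add: ennreal_mult ennreal_plus)
      also have "\<dots> \<le> ennreal 2 * (ennreal (alpha M p ?V (X k)) + ell M p (X k) (I k) (Xp k) \<theta> * ennreal (\<delta> k powr \<theta>))"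
        using Aell by (intro mult_left_mono add_left_mono) auto
      also have "\<dots> \<le> RHS" unfolding RHS_def by (intro mult_left_mono) auto
      finally show ?thesis .
    qed
  qed
  show ?thesis
    unfolding RHS_def[symmetric]
    by (intro SUP_least) (use main in auto)
qed

end
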